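(* Let $r \in \mathbb{Z}_{\geqslant 2}$. For any real number $x \geqslant 1$, $$\sum_{n_1 \leqslant x, \dotsc, n_r \leqslant x} \left( \mu \left( n_1 \right) + \dotsb + \mu \left( n_r \right) \right) \left \lfloor \frac{x}{n_1 \dotsb n_r} \right \rfloor = r \sum_{n \leqslant x} \tau_{r-1}(n),$$ where the sum on the left runs over all $r$-tuples of positive integers $n_1,\dots,n_r \leqslant x$.
   Context: $\mu$ is the Möbius function, $\lfloor \cdot \rfloor$ the integer part, and $\tau_k(n)$ is the number of ways of writing $n$ as an ordered product of $k$ positive integers (so $\tau_1 \equiv 1$, $\tau_2 = \tau$ is the divisor function). *)

theory Defs
  imports "HOL-Analysis.Analysis" "HOL-Computational_Algebra.Squarefree"
begin

text \<open>Moebius function on positive integers (value at 0 is irrelevant; set to 0).\<close>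
definition moebius_mu :: "nat \<Rightarrow> int" where
  "moebius_mu n = (if n = 0 \<or> \<not> squarefree n then 0 else (-1) ^ card (prime_factors n))"

definition divisor_tau :: "nat \<Rightarrow> nat \<Rightarrow> nat" where
  "divisor_tau k n = card {d \<in> {0..<k} \<rightarrow>\<^sub>E {1..n}. (\<Prod>i<k. d i) = n}"

end

theory Submission imports Defs begin

lemma sf_prod_pf:
  fixes d :: nat assumes "squarefree d" shows "(\<Prod>p\<in>prime_factors d. p) = d"
proof -
  have d0: "d \<noteq> 0" using assms by (metis not_squarefree_0)
  have "(\<Prod>p\<in>prime_factors d. p) = (\<Prod>p \<in> prime_factors d. p ^ multiplicity p d)"
    using assms d0 by (intro prod.cong) (auto simp: squarefree_factorial_semiring')
  also have "\<dots> = d" using prod_prime_factors[OF d0] by simp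
  finally show ?thesis .
qed

lemma pf_prod_primes:
  fixes S :: "nat set" assumes "finite S" "\<And>p. p \<in> S \<Longrightarrow> prime p"
  shows "prime_factors (\<Prod>S) = S"
proof -
  have "0 \<notin> id ` S" using assms by (metis id_apply image_iff not_prime_0)
  then have "prime_factors (prod id S) = \<Union>((prime_factors \<circ> id) ` S)"
    using prime_factors_prod[OF assms(1)] by blast
  also have "\<dots> = S" using assms by (auto simp: prime_prime_factors)
  finally show ?thesis by simp
qed

lemma sf_prod_primes:
  fixes S :: "nat set" assumes "finite S" "\<And>p. p \<in> S \<Longrightarrow> prime p"
  shows "squarefree (\<Prod>S)"
  using assms by (intro squarefree_prod_coprime) (auto simp: primes_coprime squarefree_prime)

lemma prod_sub_pf_dvd:
  fixes n :: nat assumes "n > 0" "S \<subseteq> prime_factors n"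
  shows "\<Prod>S dvd n"
proof -
  have "\<Prod>S dvd (\<Prod>p\<in>S. p ^ multiplicity p n)"
    using assms by (intro prod_dvd_prod) (auto simp: prime_factors_multiplicity)
  also have "\<dots> dvd (\<Prod>p\<in>prime_factors n. p ^ multiplicity p n)"
    using assms by (intro prod_dvd_prod_subset) auto
  also have "\<dots> = n" using prod_prime_factors[of n] assms by simp
  finally show ?thesis .
qed

lemma mu_divsum:
  fixes n :: nat assumes "n > 0"
  shows "(\<Sum>d | d dvd n. moebius_mu d) = (if n = 1 then 1 else 0)"
proof -
  have fin: "finite {d. d dvd n}" using assms by simp
  have "(\<Sum>d | d dvd n. moebius_mu d) = (\<Sum>d | d dvd n \<and> squarefree d. (-1) ^ card (prime_factors d))"
    using fin by (intro sum.mono_neutral_cong_right) (auto simp: moebius_mu_def intro!: gr0I)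
  also have "\<dots> = (\<Sum>S\<in>Pow (prime_factors n). (-1) ^ card S)"
  proof (rule sum.reindex_bij_witness[where i = "\<lambda>S. \<Prod>S" and j = prime_factors])
    fix S assume S: "S \<in> Pow (prime_factors n)"
    then have fS: "finite S" by (auto intro: finite_subset)
    have pS: "\<And>p. p \<in> S \<Longrightarrow> prime p" using S by auto
    show "prime_factors (\<Prod>S) = S" using pf_prod_primes[OF fS pS] .
    show "\<Prod>S \<in> {d. d dvd n \<and> squarefree d}"
      using prod_sub_pf_dvd[OF assms] S sf_prod_primes[OF fS pS] by auto
  next
    fix d assume "d \<in> {d. d dvd n \<and> squarefree d}"
    then show "\<Prod>(prime_factors d) = d" "prime_factors d \<in> Pow (prime_factors n)"
      using sf_prod_pf assms by (auto intro: dvd_trans simp: in_prime_factors_iff)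
  next
    fix d show "(-1::int) ^ card (prime_factors d) = (-1) ^ card (prime_factors d)" by simp
  qed
  also have "\<dots> = (\<Prod>p\<in>prime_factors n. (1::int) - 1)"
    by (subst prod_diff_conv_sum) simp_all
  also have "\<dots> = (if n = 1 then 1 else 0)"
    using assms by (auto simp: prime_factorization_empty_iff card_gt_0_iff)
  finally show ?thesis .
qed

lemma Suc_div_dvd:
  fixes M y :: nat assumes "y > 0"
  shows "Suc M div y = M div y + (if y dvd Suc M then 1 else 0)"
proof -
  have "Suc M = M + 1" by simp
  show ?thesis
  proof (cases "y dvd Suc M")
    case True
    then obtain q where q: "Suc M = y * q" by blast
    then have "q > 0" by (cases q) auto
    have "M div y = q - 1"
    proof (rule div_nat_eqI)
      show "y * (q - 1) \<le> M" using q \<open>q > 0\<close> assms by (cases q) auto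
      show "M < y * Suc (q - 1)" using q \<open>q > 0\<close> by simp
    qed
    then show ?thesis using q True assms \<open>q > 0\<close> by simp
  next
    case False
    then have "Suc M mod y \<noteq> 0" by (simp add: mod_eq_0_iff_dvd)
    then have "Suc M div y = M div y" using assms
      by (metis div_mult_mod_eq mod_Suc div_Suc)
    then show ?thesis using False by simp
  qed
qed

lemma mu_floor_sum:
  fixes M :: nat
  shows "(\<Sum>y=1..M. moebius_mu y * int (M div y)) = (if M = 0 then 0 else 1)"
proof (induction M)
  case 0 then show ?case by simp
next
  case (Suc M)
  have dv: "\<And>x. x dvd Suc M \<Longrightarrow> 1 \<le> x" by (case_tac x) auto
  have "(\<Sum>y=1..Suc M. moebius_mu y * int (Suc M div y))
     = (\<Sum>y=1..Suc M. moebius_mu y * int (M div y)) + (\<Sum>y=1..Suc M. if y dvd Suc M then moebius_mu y else 0)"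
    by (subst sum.distrib[symmetric], intro sum.cong) (auto simp: Suc_div_dvd algebra_simps)
  also have "(\<Sum>y=1..Suc M. moebius_mu y * int (M div y)) = (\<Sum>y=1..M. moebius_mu y * int (M div y))"
    by simp
  also have "(\<Sum>y=1..Suc M. if y dvd Suc M then moebius_mu y else 0) = (\<Sum>d | d dvd Suc M. moebius_mu d)"
    by (subst sum.inter_filter[symmetric]) (auto intro!: sum.cong dest: dvd_imp_le dv)
  also have "\<dots> = (if Suc M = 1 then 1 else 0)" by (rule mu_divsum) simp
  finally show ?case using Suc.IH by simp
qed

lemma mu_floor_sum':
  fixes M N :: nat assumes "M \<le> N"
  shows "(\<Sum>y=1..N. moebius_mu y * int (M div y)) = (if M = 0 then 0 else 1)"
proof -
  have "(\<Sum>y=1..N. moebius_mu y * int (M div y)) = (\<Sum>y=1..M. moebius_mu y * int (M div y))"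
    using assms by (intro sum.mono_neutral_right) auto
  then show ?thesis using mu_floor_sum by simp
qed

lemma PiE_prod_pos:
  fixes g :: "nat \<Rightarrow> nat"
  assumes "g \<in> {0..<k} \<rightarrow>\<^sub>E {1..N}" shows "(\<Prod>i<k. g i) > 0"
proof -
  have "\<And>i. i < k \<Longrightarrow> 0 < g i" using PiE_mem[OF assms] by fastforce
  then show ?thesis by (intro prod_pos) simp
qed

lemma div0_aux: "0 < (P::nat) \<Longrightarrow> (if N div P = 0 then 0 else 1::int) = (if P \<le> N then 1 else 0)"
  by (auto simp: div_eq_0_iff)

lemma last_coord:
  fixes N k :: nat
  shows "(\<Sum>n \<in> {0..<Suc k} \<rightarrow>\<^sub>E {1..N}. moebius_mu (n k) * int (N div (\<Prod>i<Suc k. n i)))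
       = int (card {g \<in> {0..<k} \<rightarrow>\<^sub>E {1..N}. (\<Prod>i<k. g i) \<le> N})"
proof -
  let ?A = "{1..N}" and ?P = "{0..<k} \<rightarrow>\<^sub>E {1..N}"
  let ?h = "\<lambda>(y, g). g(k := y)"
  have ins: "{0..<Suc k} = insert k {0..<k}" by auto
  have inj: "inj_on ?h (?A \<times> ?P)"
  proof (rule inj_onI, clarify)
    fix y g y' g' assume a: "y \<in> ?A" "g \<in> ?P" "y' \<in> ?A" "g' \<in> ?P" "g(k := y) = g'(k := y')"
    then have "y = y'" by (metis fun_upd_same)
    moreover have "g = g'"
    proof
      fix j show "g j = g' j"
      proof (cases "j = k")
        case True then show ?thesis using a by (auto simp: PiE_def extensional_def)
      next
        case False then show ?thesis using a(5) by (metis fun_upd_other)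
      qed
    qed
    ultimately show "y = y' \<and> g = g'" by simp
  qed
  have "(\<Sum>n \<in> {0..<Suc k} \<rightarrow>\<^sub>E ?A. moebius_mu (n k) * int (N div (\<Prod>i<Suc k. n i)))
      = (\<Sum>z \<in> ?A \<times> ?P. moebius_mu (?h z k) * int (N div (\<Prod>i<Suc k. ?h z i)))"
    unfolding ins PiE_insert_eq by (subst sum.reindex[OF inj]) (simp add: case_prod_beta)
  also have "\<dots> = (\<Sum>(y,g) \<in> ?A \<times> ?P. moebius_mu y * int (N div ((\<Prod>i<k. g i) * y)))"
    by (intro sum.cong refl) (clarsimp simp: prod.lessThan_Suc)
  also have "\<dots> = (\<Sum>y \<in> ?A. \<Sum>g \<in> ?P. moebius_mu y * int (N div ((\<Prod>i<k. g i) * y)))"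
    by (rule sum.cartesian_product[symmetric])
  also have "\<dots> = (\<Sum>g \<in> ?P. \<Sum>y \<in> ?A. moebius_mu y * int ((N div (\<Prod>i<k. g i)) div y))"
    by (subst sum.swap) (simp add: div_mult2_eq)
  also have "\<dots> = (\<Sum>g \<in> ?P. if (\<Prod>i<k. g i) \<le> N then 1 else 0)"
  proof (intro sum.cong refl)
    fix g assume g: "g \<in> ?P"
    have pos: "(\<Prod>i<k. g i) > 0" using PiE_prod_pos[OF g] .
    have "(\<Sum>y \<in> ?A. moebius_mu y * int ((N div (\<Prod>i<k. g i)) div y)) = (if N div (\<Prod>i<k. g i) = 0 then 0 else 1)"
      by (rule mu_floor_sum') simp
    also have "\<dots> = (if (\<Prod>i<k. g i) \<le> N then 1 else 0)"
      using div0_aux[OF pos] .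
    finally show "(\<Sum>y \<in> ?A. moebius_mu y * int ((N div (\<Prod>i<k. g i)) div y)) = (if (\<Prod>i<k. g i) \<le> N then 1 else 0)" .
  qed
  also have "\<dots> = int (card {g \<in> ?P. (\<Prod>i<k. g i) \<le> N})"
    by (simp add: sum.inter_filter[symmetric] finite_PiE)
  finally show ?thesis .
qed

lemma sym_coord:
  fixes F :: "nat \<Rightarrow> int" and B :: "nat set"
  assumes "i < Suc k"
  shows "(\<Sum>n \<in> {0..<Suc k} \<rightarrow>\<^sub>E B. moebius_mu (n i) * F (\<Prod>j<Suc k. n j))
       = (\<Sum>n \<in> {0..<Suc k} \<rightarrow>\<^sub>E B. moebius_mu (n k) * F (\<Prod>j<Suc k. n j))"
proof -
  define \<sigma> where "\<sigma> j = (if j = i then k else if j = k then i else j)" for j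
  have ss: "\<sigma> (\<sigma> j) = j" for j by (auto simp: \<sigma>_def)
  have sr: "j < Suc k \<longleftrightarrow> \<sigma> j < Suc k" for j using assms by (auto simp: \<sigma>_def)
  have pr: "(\<Prod>j<Suc k. n (\<sigma> j)) = (\<Prod>j<Suc k. n j)" for n :: "nat \<Rightarrow> nat"
    by (rule prod.reindex_bij_witness[where i = \<sigma> and j = \<sigma>]) (auto simp: ss sr[symmetric])
  show ?thesis
  proof (rule sum.reindex_bij_witness[where i = "\<lambda>n. n \<circ> \<sigma>" and j = "\<lambda>n. n \<circ> \<sigma>"])
    fix n show "n \<circ> \<sigma> \<circ> \<sigma> = n" by (auto simp: ss)
  next
    fix n assume n: "n \<in> {0..<Suc k} \<rightarrow>\<^sub>E B"
    show "n \<circ> \<sigma> \<in> {0..<Suc k} \<rightarrow>\<^sub>E B"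
    proof (rule PiE_I)
      fix j assume "j \<in> {0..<Suc k}" then show "(n \<circ> \<sigma>) j \<in> B" using n sr[of j] by (auto simp: PiE_iff)
    next
      fix j assume "j \<notin> {0..<Suc k}" then show "(n \<circ> \<sigma>) j = undefined" using n sr[of j] by (auto simp: PiE_def extensional_def)
    qed
    then show "n \<circ> \<sigma> \<in> {0..<Suc k} \<rightarrow>\<^sub>E B" .
    show "moebius_mu ((n \<circ> \<sigma>) k) * F (\<Prod>j<Suc k. (n \<circ> \<sigma>) j) = moebius_mu (n i) * F (\<Prod>j<Suc k. n j)"
      using pr[of n] by (simp add: \<sigma>_def)
  next
    fix n show "n \<circ> \<sigma> \<circ> \<sigma> = n" by (auto simp: ss)
  qed
qed

lemma card_tau:
  fixes N k :: nat
  shows "card {g \<in> {0..<k} \<rightarrow>\<^sub>E {1..N}. (\<Prod>i<k. g i) \<le> N} = (\<Sum>m = 1..N. divisor_tau k m)"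
proof -
  have eq: "{g \<in> {0..<k} \<rightarrow>\<^sub>E {1..N}. (\<Prod>i<k. g i) \<le> N}
      = (\<Union>m\<in>{1..N}. {d \<in> {0..<k} \<rightarrow>\<^sub>E {1..m}. (\<Prod>i<k. d i) = m})"
  proof (intro equalityI subsetI)
    fix g assume g: "g \<in> {g \<in> {0..<k} \<rightarrow>\<^sub>E {1..N}. (\<Prod>i<k. g i) \<le> N}"
    let ?m = "\<Prod>i<k. g i"
    have gP: "g \<in> {0..<k} \<rightarrow>\<^sub>E {1..N}" using g by simp
    have pos: "?m > 0" using PiE_prod_pos[OF gP] .
    have "g \<in> {0..<k} \<rightarrow>\<^sub>E {1..?m}"
    proof (rule PiE_I)
      fix j assume j: "j \<in> {0..<k}"
      have "g j dvd ?m" using j by (intro dvd_prodI) auto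
      then have "g j \<le> ?m" using pos by (rule dvd_imp_le)
      moreover have "g j \<ge> 1" using PiE_mem[OF gP j] by simp
      ultimately show "g j \<in> {1..?m}" by simp
    next
      fix j assume "j \<notin> {0..<k}" then show "g j = undefined" using gP by (auto simp: PiE_def extensional_def)
    qed
    moreover have "?m \<in> {1..N}"
    proof -
      have m1: "1 \<le> ?m" using pos by (simp only: One_nat_def Suc_le_eq)
      have "?m \<le> N" using g by blast
      then show ?thesis using m1 by (simp only: atLeastAtMost_iff)
    qed
    ultimately show "g \<in> (\<Union>m\<in>{1..N}. {d \<in> {0..<k} \<rightarrow>\<^sub>E {1..m}. (\<Prod>i<k. d i) = m})"
      by blast
  next
    fix g assume "g \<in> (\<Union>m\<in>{1..N}. {d \<in> {0..<k} \<rightarrow>\<^sub>E {1..m}. (\<Prod>i<k. d i) = m})"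
    then obtain m where m: "m \<in> {1..N}" "g \<in> {0..<k} \<rightarrow>\<^sub>E {1..m}" "(\<Prod>i<k. g i) = m" by blast
    have "g \<in> {0..<k} \<rightarrow>\<^sub>E {1..N}" using m(2) PiE_mono[of "{0..<k}" "\<lambda>_. {1..m}" "\<lambda>_. {1..N}"] m(1) by auto
    then show "g \<in> {g \<in> {0..<k} \<rightarrow>\<^sub>E {1..N}. (\<Prod>i<k. g i) \<le> N}" using m by auto
  qed
  show ?thesis unfolding eq divisor_tau_def
    by (rule card_UN_disjoint) (auto simp: finite_PiE)
qed

theorem theorem1p6:
  fixes r :: nat and x :: real
  assumes "r \<ge> 2" and "x \<ge> 1"
  shows "(\<Sum>n \<in> {0..<r} \<rightarrow>\<^sub>E {1..nat \<lfloor>x\<rfloor>}.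
            of_int (\<Sum>i<r. moebius_mu (n i)) * of_int \<lfloor>x / real (\<Prod>i<r. n i)\<rfloor>)
         = (of_nat r * (\<Sum>m = 1..nat \<lfloor>x\<rfloor>. of_nat (divisor_tau (r - 1) m)) :: int)"
proof -
  define N where "N = nat \<lfloor>x\<rfloor>"
  define k where "k = r - 1"
  have r: "r = Suc k" using assms(1) by (simp add: k_def)
  have xN: "\<lfloor>x\<rfloor> = int N" using assms(2) by (simp add: N_def)
  let ?P = "{0..<Suc k} \<rightarrow>\<^sub>E {1..N}"
  have fl: "\<lfloor>x / real P\<rfloor> = int (N div P)" for P :: nat
  proof -
    have "\<lfloor>x / real P\<rfloor> = \<lfloor>x / real_of_int (int P)\<rfloor>" by simp
    also have "\<dots> = \<lfloor>x\<rfloor> div int P" by (rule floor_divide_real_eq_div) simp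
    also have "\<dots> = int (N div P)" by (simp add: xN zdiv_int)
    finally show ?thesis .
  qed
  have "(\<Sum>n \<in> ?P. of_int (\<Sum>i<Suc k. moebius_mu (n i)) * of_int \<lfloor>x / real (\<Prod>i<Suc k. n i)\<rfloor>)
      = (\<Sum>n \<in> ?P. \<Sum>i<Suc k. moebius_mu (n i) * int (N div (\<Prod>j<Suc k. n j)))"
    by (simp only: fl of_int_eq_id id_apply sum_distrib_right)
  also have "\<dots> = (\<Sum>i<Suc k. \<Sum>n \<in> ?P. moebius_mu (n i) * int (N div (\<Prod>j<Suc k. n j)))"
    by (rule sum.swap)
  also have "\<dots> = (\<Sum>i<Suc k. int (card {g \<in> {0..<k} \<rightarrow>\<^sub>E {1..N}. (\<Prod>i<k. g i) \<le> N}))"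
  proof (intro sum.cong refl)
    fix i assume "i \<in> {..<Suc k}"
    then have "(\<Sum>n \<in> ?P. moebius_mu (n i) * int (N div (\<Prod>j<Suc k. n j)))
        = (\<Sum>n \<in> ?P. moebius_mu (n k) * int (N div (\<Prod>j<Suc k. n j)))"
      using sym_coord[of i k "\<lambda>P. int (N div P)" "{1..N}"] by simp
    also have "\<dots> = int (card {g \<in> {0..<k} \<rightarrow>\<^sub>E {1..N}. (\<Prod>i<k. g i) \<le> N})"
      by (rule last_coord)
    finally show "(\<Sum>n \<in> ?P. moebius_mu (n i) * int (N div (\<Prod>j<Suc k. n j)))
        = int (card {g \<in> {0..<k} \<rightarrow>\<^sub>E {1..N}. (\<Prod>i<k. g i) \<le> N})" .
  qed
  also have "\<dots> = of_nat (Suc k) * (\<Sum>m = 1..N. of_nat (divisor_tau k m))"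
    by (simp only: sum_constant card_tau of_nat_sum) (simp add: of_nat_sum)
  finally show ?thesis unfolding r N_def[symmetric] by simp
qed

end
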